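(* Let $\mathcal{W}=(Q,\Sigma,\delta,q_\iota,\mathrm{Acc})$ be a binary-branching probabilistic parity word automaton, and for $q\in Q,a\in\Sigma$ write $\delta(q,a)=\{q_1,q_2\}$ for the two distinct states with $\delta(q,a,q_i)=\tfrac12$. Let $\mathcal{A}_\mathcal{W}=(Q,\Sigma,\delta_1,q_\iota,\mathrm{Acc})$ be the probabilistic tree automaton with $\delta_1(p,a,q,q)=\delta(p,a,q)$ and $\delta_1(p,a,q,q')=0$ for $q\neq q'$, and let $\mathcal{A}^{\mathrm{switch}}_\mathcal{W}=(Q,\Sigma,\delta_2,q_\iota,\mathrm{Acc})$ be the probabilistic tree automaton with $\delta_2(p,a,q_1,q_2)=\delta_2(p,a,q_2,q_1)=\tfrac12$ whenever $\delta(p,a)=\{q_1,q_2\}$, and $\delta_2(p,a,q,q')=0$ otherwise. Then $\mathcal{L}^{=1}_{\mathrm{qual}}(\mathcal{A}_\mathcal{W})=\mathcal{L}^{=1}_{\mathrm{qual}}(\mathcal{A}^{\mathrm{switch}}_\mathcal{W})$.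
   Context: Probabilistic word automaton: $(Q,\Sigma,\delta,q_\iota,\mathrm{Acc})$, $Q$ finite, $\Sigma$ finite, $\delta:Q\times\Sigma\times Q\to[0,1]$ with $\sum_p\delta(q,a,p)=1$. Binary branching: all transition probabilities lie in $\{0,\tfrac12\}$. Parity condition given by $\alpha:Q\to\{0,\dots,k\}$: a sequence $r\in Q^\omega$ is in $\mathrm{Acc}$ iff the minimum of $\alpha(q)$ over states occurring infinitely often in $r$ is even. Trees: a $\Sigma$-tree is a map $t:\{0,1\}^*\to\Sigma$; a branch is $\pi\in\{0,1\}^\omega$ and $t(\pi)=t(\epsilon)t(\pi_0)t(\pi_0\pi_1)\cdots$. The coin-flipping measure $\mu$ on $\{0,1\}^\omega$ gives the cone $u\{0,1\}^\omega$ measure $2^{-|u|}$. A probabilistic tree automaton is $(Q,\Sigma,\delta,q_\iota,\mathrm{Acc})$ with $\delta:Q\times\Sigma\times Q\times Q\to[0,1]$, $\sum_{q_0,q_1}\delta(q,a,q_0,q_1)=1$. A run on $t$ is a $Q$-tree $\rho$ with $\rho(\epsilon)=q_\iota$ and $\delta(\rho(u),t(u),\rho(u0),\rho(u1))>0$ for all $u$. A run is qualitatively accepting if $\mu(\{\pi:\rho(\pi)\in\mathrm{Acc}\})=1$. The measure $\mu_t$ on runs on $t$: the set of runs agreeing with a given partial run on all nodes of length $\le n$ has measure $\prod_{|u|<n}\delta(\rho(u),t(u),\rho(u0),\rho(u1))$ (children labels chosen independently at every node). $\mathcal{L}^{=1}_{\mathrm{qual}}(\mathcal{A})=\{t:\mu_t(\{\rho:\rho\text{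 qualitatively accepting}\})=1\}$. *)

theory Defs
  imports "HOL-Probability.Probability"
begin

text \<open>Trees are maps bool list => _ ; the empty list is the root, u @ [False] / u @ [True]
  are the children u0 / u1 of u.\<close>

definition parity_acc :: "('q::finite \<Rightarrow> nat) \<Rightarrow> (nat \<Rightarrow> 'q) \<Rightarrow> bool" where
  "parity_acc \<alpha> r \<longleftrightarrow> even (Min {\<alpha> q | q. \<exists>\<^sub>\<infinity> n. r n = q})"

definition binary_branching_word :: "('q::finite \<Rightarrow> 'a \<Rightarrow> 'q \<Rightarrow> real) \<Rightarrow> bool" where
  "binary_branching_word \<delta> \<longleftrightarrow>
     (\<forall>q a p. \<delta> q a p \<in> {0, 1/2}) \<and> (\<forall>q a. (\<Sum>p\<in>UNIV. \<delta> q a p) = 1)"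

definition along :: "(bool list \<Rightarrow> 'b) \<Rightarrow> (nat \<Rightarrow> bool) \<Rightarrow> nat \<Rightarrow> 'b" where
  "along t \<pi> n = t (map \<pi> [0..<n])"

definition coin :: "(nat \<Rightarrow> bool) measure" where
  "coin = PiM UNIV (\<lambda>_. measure_pmf (pmf_of_set (UNIV :: bool set)))"

definition is_run ::
  "('q \<Rightarrow> 'a \<Rightarrow> 'q \<Rightarrow> 'q \<Rightarrow> real) \<Rightarrow> 'q \<Rightarrow> (bool list \<Rightarrow> 'a) \<Rightarrow> (bool list \<Rightarrow> 'q) \<Rightarrow> bool" where
  "is_run \<delta> q0 t \<rho> \<longleftrightarrow> \<rho> [] = q0 \<and>
     (\<forall>u. \<delta> (\<rho> u) (t u) (\<rho> (u @ [False])) (\<rho> (u @ [True])) > 0)"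

definition qual_accepting :: "('q::finite \<Rightarrow> nat) \<Rightarrow> (bool list \<Rightarrow> 'q) \<Rightarrow> bool" where
  "qual_accepting \<alpha> \<rho> \<longleftrightarrow> emeasure coin {\<pi>. parity_acc \<alpha> (along \<rho> \<pi>)} = 1"

definition tree_space :: "(bool list \<Rightarrow> 'q) measure" where
  "tree_space = PiM UNIV (\<lambda>_. count_space UNIV)"

definition cyl :: "(bool list \<Rightarrow> 'q) \<Rightarrow> nat \<Rightarrow> (bool list \<Rightarrow> 'q) set" where
  "cyl \<rho> n = {\<rho>'. \<forall>u. length u \<le> n \<longrightarrow> \<rho>' u = \<rho> u}"

definition run_measure ::
  "('q::finite \<Rightarrow> 'a \<Rightarrow> 'q \<Rightarrow> 'q \<Rightarrow> real) \<Rightarrow> 'q \<Rightarrow> (bool list \<Rightarrow> 'a) \<Rightarrow> (bool list \<Rightarrow> 'q) measure" where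
  "run_measure \<delta> q0 t = (SOME M. prob_space M \<and> sets M = sets tree_space \<and>
     (\<forall>\<rho> n. emeasure M (cyl \<rho> n) =
        (if \<rho> [] = q0
         then ennreal (\<Prod>u\<in>{u. length u < n}. \<delta> (\<rho> u) (t u) (\<rho> (u @ [False])) (\<rho> (u @ [True])))
         else 0)))"

definition lang_qual ::
  "('q::finite \<Rightarrow> 'a \<Rightarrow> 'q \<Rightarrow> 'q \<Rightarrow> real) \<Rightarrow> 'q \<Rightarrow> ('q \<Rightarrow> nat) \<Rightarrow> (bool list \<Rightarrow> 'a) set" where
  "lang_qual \<delta> q0 \<alpha> = {t. emeasure (run_measure \<delta> q0 t)
       {\<rho>. is_run \<delta> q0 t \<rho> \<and> qual_accepting \<alpha> \<rho>} = 1}"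

definition delta1 :: "('q \<Rightarrow> 'a \<Rightarrow> 'q \<Rightarrow> real) \<Rightarrow> 'q \<Rightarrow> 'a \<Rightarrow> 'q \<Rightarrow> 'q \<Rightarrow> real" where
  "delta1 \<delta> p a q q' = (if q = q' then \<delta> p a q else 0)"

definition delta2 :: "('q \<Rightarrow> 'a \<Rightarrow> 'q \<Rightarrow> real) \<Rightarrow> 'q \<Rightarrow> 'a \<Rightarrow> 'q \<Rightarrow> 'q \<Rightarrow> real" where
  "delta2 \<delta> p a q q' =
     (if q \<noteq> q' \<and> \<delta> p a q = 1/2 \<and> \<delta> p a q' = 1/2 then 1/2 else 0)"

end

theory Submission
  imports Defs
begin


definition Coins :: "(bool list \<Rightarrow> bool) measure" where
  "Coins = PiM UNIV (\<lambda>_. measure_pmf (pmf_of_set (UNIV :: bool set)))"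

lemma space_Coins[simp]: "space Coins = UNIV" by (simp add: Coins_def space_PiM)
lemma space_tree[simp]: "space tree_space = UNIV" by (simp add: tree_space_def space_PiM)
lemma space_coin[simp]: "space coin = UNIV" by (simp add: coin_def space_PiM)

lemma prob_Coins: "prob_space Coins"
  unfolding Coins_def by (intro prob_space_PiM prob_space_measure_pmf)
lemma prob_coin: "prob_space coin"
  unfolding coin_def by (intro prob_space_PiM prob_space_measure_pmf)

fun hrun :: "('q \<Rightarrow> 'a \<Rightarrow> bool \<Rightarrow> bool \<Rightarrow> 'q) \<Rightarrow> 'q \<Rightarrow> (bool list \<Rightarrow> 'a) \<Rightarrow> (bool list \<Rightarrow> bool) \<Rightarrow> bool list \<Rightarrow> 'q" where
  "hrun g q0 t c [] = q0"
| "hrun g q0 t c (b # rs) = g (hrun g q0 t c rs) (t (rev rs)) (c (rev rs)) b"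

definition Frun :: "('q \<Rightarrow> 'a \<Rightarrow> bool \<Rightarrow> bool \<Rightarrow> 'q) \<Rightarrow> 'q \<Rightarrow> (bool list \<Rightarrow> 'a) \<Rightarrow> (bool list \<Rightarrow> bool) \<Rightarrow> bool list \<Rightarrow> 'q" where
  "Frun g q0 t c u = hrun g q0 t c (rev u)"

lemma Frun_Nil[simp]: "Frun g q0 t c [] = q0" by (simp add: Frun_def)
lemma Frun_snoc[simp]: "Frun g q0 t c (u @ [b]) = g (Frun g q0 t c u) (t u) (c u) b"
  by (simp add: Frun_def)

lemma meas_comp_Coins: "(\<lambda>c. c u) \<in> Coins \<rightarrow>\<^sub>M count_space UNIV"
proof -
  have "(\<lambda>c. c u) \<in> Coins \<rightarrow>\<^sub>M measure_pmf (pmf_of_set (UNIV :: bool set))"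
    unfolding Coins_def by (rule measurable_component_singleton) simp
  then show ?thesis by (simp add: measurable_def)
qed

lemma meas_hrun: "(\<lambda>c. hrun g q0 t c rs) \<in> Coins \<rightarrow>\<^sub>M count_space (UNIV :: 'q::countable set)"
proof (induction rs)
  case Nil then show ?case by simp
next
  case (Cons b rs)
  have "(\<lambda>c. (\<lambda>q c. g q (t (rev rs)) (c (rev rs)) b) (hrun g q0 t c rs) c) \<in> Coins \<rightarrow>\<^sub>M count_space UNIV"
  proof (rule measurable_compose_countable[OF _ Cons.IH])
    fix q :: 'q
    show "(\<lambda>c. g q (t (rev rs)) (c (rev rs)) b) \<in> Coins \<rightarrow>\<^sub>M count_space UNIV"
      by (rule measurable_compose[OF meas_comp_Coins]) simp
  qed
  then show ?case by simp
qed

lemma meas_Frun_u: "(\<lambda>c. Frun g q0 t c u) \<in> Coins \<rightarrow>\<^sub>M count_space (UNIV :: 'q::countable set)"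
  unfolding Frun_def by (rule meas_hrun)

lemma meas_Frun: "(\<lambda>c. Frun g q0 t c) \<in> Coins \<rightarrow>\<^sub>M (tree_space :: (bool list \<Rightarrow> 'q::countable) measure)"
  unfolding tree_space_def by (rule measurable_PiM_single') (auto intro: meas_Frun_u)

definition Sset :: "('q \<Rightarrow> 'a \<Rightarrow> bool \<Rightarrow> bool \<Rightarrow> 'q) \<Rightarrow> (bool list \<Rightarrow> 'a) \<Rightarrow> (bool list \<Rightarrow> 'q) \<Rightarrow> bool list \<Rightarrow> bool set" where
  "Sset g t \<rho> u = {x. \<forall>b. g (\<rho> u) (t u) x b = \<rho> (u @ [b])}"

lemma all_len_Suc: "(\<forall>v::'x list. length v \<le> Suc n \<longrightarrow> P v) \<longleftrightarrow> (\<forall>v. length v \<le> n \<longrightarrow> P v) \<and> (\<forall>u b. length u = n \<longrightarrow> P (u @ [b]))"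
proof safe
  fix v :: "'x list" assume H: "\<forall>v. length v \<le> n \<longrightarrow> P v" "\<forall>u b. length u = n \<longrightarrow> P (u @ [b])" "length v \<le> Suc n"
  show "P v"
  proof (cases "length v \<le> n")
    case True then show ?thesis using H by auto
  next
    case False
    then obtain u b where "v = u @ [b]" by (cases v rule: rev_exhaust) auto
    then show ?thesis using H False by auto
  qed
qed auto

lemma Frun_cyl: "Frun g q0 t c \<in> cyl \<rho> n \<longleftrightarrow> \<rho> [] = q0 \<and> (\<forall>u. length u < n \<longrightarrow> c u \<in> Sset g t \<rho> u)"
proof (induction n)
  case 0
  then show ?case by (auto simp: cyl_def)
next
  case (Suc n)
  have "Frun g q0 t c \<in> cyl \<rho> (Suc n) \<longleftrightarrow> Frun g q0 t c \<in> cyl \<rho> n \<and> (\<forall>u b. length u = n \<longrightarrow> Frun g q0 t c (u @ [b]) = \<rho> (u @ [b]))"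
    unfolding cyl_def mem_Collect_eq by (rule all_len_Suc)
  also have "\<dots> \<longleftrightarrow> Frun g q0 t c \<in> cyl \<rho> n \<and> (\<forall>u. length u = n \<longrightarrow> c u \<in> Sset g t \<rho> u)"
    by (auto simp: cyl_def Sset_def)
  also have "\<dots> \<longleftrightarrow> \<rho> [] = q0 \<and> (\<forall>u. length u < Suc n \<longrightarrow> c u \<in> Sset g t \<rho> u)"
    unfolding Suc.IH by (auto simp: less_Suc_eq)
  finally show ?case .
qed

lemma finite_len_less: "finite {u :: bool list. length u < n}"
proof -
  have "{u :: bool list. length u < n} \<subseteq> {xs. set xs \<subseteq> UNIV \<and> length xs \<le> n}" by auto
  then show ?thesis using finite_lists_length_le[of "UNIV :: bool set" n] finite_subset by auto
qed

lemma finite_len_le: "finite {u :: bool list. length u \<le> n}"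
  using finite_lists_length_le[of "UNIV :: bool set" n] by simp

lemma emeasure_coinset: "emeasure (measure_pmf (pmf_of_set (UNIV :: bool set))) X = ennreal (real (card X) / 2)"
  by (subst emeasure_pmf_of_set) auto

lemma emeasure_Frun_cyl:
  "emeasure Coins {c. Frun g q0 t c \<in> cyl \<rho> n} =
     (if \<rho> [] = q0 then (\<Prod>u\<in>{u. length u < n}. ennreal (real (card (Sset g t \<rho> u)) / 2)) else 0)"
proof (cases "\<rho> [] = q0")
  case True
  interpret product_prob_space "\<lambda>_. measure_pmf (pmf_of_set (UNIV :: bool set))" "UNIV :: bool list set"
    by unfold_locales
  have "{c. Frun g q0 t c \<in> cyl \<rho> n} = {c \<in> space Coins. \<forall>u\<in>{u. length u < n}. c u \<in> Sset g t \<rho> u}"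
    using True by (auto simp: Frun_cyl)
  also have "emeasure Coins \<dots> = (\<Prod>u\<in>{u. length u < n}. emeasure (measure_pmf (pmf_of_set (UNIV :: bool set))) (Sset g t \<rho> u))"
    unfolding Coins_def by (rule emeasure_PiM_Collect) (auto simp: finite_len_less)
  finally show ?thesis using True by (simp add: emeasure_coinset)
next
  case False
  then have "{c. Frun g q0 t c \<in> cyl \<rho> n} = {}" by (auto simp: Frun_cyl)
  then show ?thesis using False by simp
qed



lemma sets_tree_single: "sets (tree_space :: (bool list \<Rightarrow> 'q) measure) = sigma_sets UNIV {{f. f u \<in> A} | u A. True}"
  unfolding tree_space_def by (subst sets_PiM_single) simp

lemma cyl_sets: "cyl \<rho> n \<in> sets (tree_space :: (bool list \<Rightarrow> 'q) measure)"
proof -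
  have "cyl \<rho> n = (\<Inter>v\<in>{v. length v \<le> n}. (\<lambda>f. f v) -` {\<rho> v} \<inter> space tree_space)"
    by (auto simp: cyl_def)
  also have "\<dots> \<in> sets tree_space"
  proof (rule sets.finite_INT)
    show "finite {v :: bool list. length v \<le> n}" by (rule finite_len_le)
    show "{v :: bool list. length v \<le> n} \<noteq> {}" by (auto intro: exI[of _ "[]"])
    fix v :: "bool list"
    have "(\<lambda>f. f v) \<in> (tree_space :: (bool list \<Rightarrow> 'q) measure) \<rightarrow>\<^sub>M count_space UNIV"
      unfolding tree_space_def by (rule measurable_component_singleton) simp
    then show "(\<lambda>f. f v) -` {\<rho> v} \<inter> space tree_space \<in> sets (tree_space :: (bool list \<Rightarrow> 'q) measure)"
      by (rule measurable_sets) simp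
  qed
  finally show ?thesis .
qed

definition cylE :: "(bool list \<Rightarrow> 'q) set set" where
  "cylE = range (\<lambda>(\<rho>, n). cyl \<rho> n) \<union> {{}}"

lemma single_in_cylE:
  "{f :: bool list \<Rightarrow> 'q::countable. f u \<in> A} \<in> sigma_sets UNIV cylE"
proof -
  define D where "D = {v :: bool list. length v \<le> length u}"
  define R where "R = {g \<in> PiE D (\<lambda>_. UNIV :: 'q set). g u \<in> A}"
  have eq: "{f :: bool list \<Rightarrow> 'q. f u \<in> A} = \<Union> ((\<lambda>g. cyl g (length u)) ` R)"
  proof safe
    fix f :: "bool list \<Rightarrow> 'q" assume "f u \<in> A"
    then have "restrict f D \<in> R" "f \<in> cyl (restrict f D) (length u)"
      by (auto simp: R_def D_def cyl_def)
    then show "f \<in> \<Union> ((\<lambda>g. cyl g (length u)) ` R)" by blast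
  next
    fix f g assume "g \<in> R" "f \<in> cyl g (length u)"
    then show "f u \<in> A" by (auto simp: R_def cyl_def)
  qed
  have "countable R"
  proof -
    have "countable (PiE D (\<lambda>_. UNIV :: 'q set))"
      by (rule countable_PiE) (auto simp: D_def finite_len_le)
    then show ?thesis unfolding R_def by (rule countable_subset[rotated]) auto
  qed
  have "\<Union> ((\<lambda>g. cyl g (length u)) ` R) \<in> sigma_sets UNIV cylE"
  proof (rule sigma_algebra.countable_Union)
    show "sigma_algebra UNIV (sigma_sets UNIV cylE)" by (rule sigma_algebra_sigma_sets) simp
    show "countable ((\<lambda>g. cyl g (length u)) ` R)" using \<open>countable R\<close> by simp
    show "(\<lambda>g. cyl g (length u)) ` R \<subseteq> sigma_sets UNIV cylE"
      by (auto simp: cylE_def intro!: sigma_sets.Basic)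
  qed
  then show ?thesis using eq by simp
qed

lemma sets_tree_cylE: "sets (tree_space :: (bool list \<Rightarrow> 'q::countable) measure) = sigma_sets UNIV cylE"
  unfolding sets_tree_single
proof (rule sigma_sets_eqI)
  fix a :: "(bool list \<Rightarrow> 'q) set" assume "a \<in> {{f. f u \<in> A} | u A. True}"
  then show "a \<in> sigma_sets UNIV cylE" using single_in_cylE by auto
next
  fix b :: "(bool list \<Rightarrow> 'q) set" assume "b \<in> cylE"
  then have "b \<in> sets (tree_space :: (bool list \<Rightarrow> 'q) measure)"
    by (auto simp: cylE_def cyl_sets)
  then show "b \<in> sigma_sets UNIV {{f. f u \<in> A} | u A. True}"
    unfolding sets_tree_single .
qed

lemma Int_stable_cylE: "Int_stable cylE"
proof (rule Int_stableI)
  have key: "cyl \<rho> n \<inter> cyl \<sigma> m \<in> cylE" if "n \<le> m" for \<rho> \<sigma> :: "bool list \<Rightarrow> 'a" and n m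
  proof (cases "\<forall>v. length v \<le> n \<longrightarrow> \<rho> v = \<sigma> v")
    case True
    then have "cyl \<rho> n \<inter> cyl \<sigma> m = cyl \<sigma> m" using that by (auto simp: cyl_def)
    then show ?thesis by (auto simp: cylE_def)
  next
    case False
    then have "cyl \<rho> n \<inter> cyl \<sigma> m = {}" using that by (fastforce simp: cyl_def)
    then show ?thesis by (auto simp: cylE_def)
  qed
  fix a b :: "(bool list \<Rightarrow> 'a) set" assume "a \<in> cylE" "b \<in> cylE"
  then consider "a = {} \<or> b = {}" | \<rho> n \<sigma> m where "a = cyl \<rho> n" "b = cyl \<sigma> m"
    by (auto simp: cylE_def)
  then show "a \<inter> b \<in> cylE"
  proof cases
    case 1 then show ?thesis by (auto simp: cylE_def)
  next
    case 2
    show ?thesis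
    proof (cases "n \<le> m")
      case True then show ?thesis using key 2 by simp
    next
      case False then show ?thesis using key[of m n \<sigma> \<rho>] 2 by (simp add: Int_commute)
    qed
  qed
qed

lemma tree_measure_unique:
  fixes M N :: "(bool list \<Rightarrow> 'q::countable) measure"
  assumes "sets M = sets tree_space" "sets N = sets tree_space"
    "finite_measure M" "\<And>\<rho> n. emeasure M (cyl \<rho> n) = emeasure N (cyl \<rho> n)"
  shows "M = N"
proof (rule measure_eqI_generator_eq_countable[of cylE UNIV _ _ "range (\<lambda>q. cyl (\<lambda>_. q) 0)"])
  show "Int_stable cylE" by (rule Int_stable_cylE)
  show "cylE \<subseteq> Pow UNIV" by simp
  fix X :: "(bool list \<Rightarrow> 'q) set" assume "X \<in> cylE"
  then show "emeasure M X = emeasure N X" using assms(4) by (auto simp: cylE_def)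
next
  show "sets M = sigma_sets UNIV cylE" "sets N = sigma_sets UNIV cylE"
    using assms(1,2) by (simp_all add: sets_tree_cylE)
  show "range (\<lambda>q. cyl (\<lambda>_. q) 0) \<subseteq> cylE" by (auto simp: cylE_def)
  show "\<Union> (range (\<lambda>q::'q. cyl (\<lambda>_. q) 0)) = UNIV" by (auto simp: cyl_def)
  show "countable (range (\<lambda>q::'q. cyl (\<lambda>_. q) 0))" by simp
  fix a assume "a \<in> range (\<lambda>q::'q. cyl (\<lambda>_. q) 0)"
  then show "emeasure M a \<noteq> \<infinity>" using assms(3) by (simp add: finite_measure.emeasure_finite)
qed



lemma run_measure_eq:
  fixes \<delta>T :: "'q::finite \<Rightarrow> 'a \<Rightarrow> 'q \<Rightarrow> 'q \<Rightarrow> real"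
  assumes card: "\<And>\<rho> u. real (card (Sset g t \<rho> u)) / 2 = \<delta>T (\<rho> u) (t u) (\<rho> (u @ [False])) (\<rho> (u @ [True]))"
  shows "run_measure \<delta>T q0 t = distr Coins tree_space (Frun g q0 t)"
proof -
  define P where "P M \<longleftrightarrow> prob_space M \<and> sets M = sets tree_space \<and>
     (\<forall>\<rho> n. emeasure M (cyl \<rho> n) =
        (if \<rho> [] = q0
         then ennreal (\<Prod>u\<in>{u. length u < n}. \<delta>T (\<rho> u) (t u) (\<rho> (u @ [False])) (\<rho> (u @ [True])))
         else 0))" for M :: "(bool list \<Rightarrow> 'q) measure"
  have rm: "run_measure \<delta>T q0 t = (SOME M. P M)" unfolding run_measure_def P_def ..
  have meas: "Frun g q0 t \<in> Coins \<rightarrow>\<^sub>M (tree_space :: (bool list \<Rightarrow> 'q) measure)"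
    by (rule meas_Frun)
  have nn: "\<And>\<rho> u. 0 \<le> \<delta>T (\<rho> u) (t u) (\<rho> (u @ [False])) (\<rho> (u @ [True]))"
    using card by (metis divide_nonneg_nonneg of_nat_0_le_iff zero_le_numeral)
  have PD: "P (distr Coins tree_space (Frun g q0 t))"
    unfolding P_def
  proof (intro conjI allI)
    show "prob_space (distr Coins tree_space (Frun g q0 t))"
      by (rule prob_space.prob_space_distr[OF prob_Coins meas])
    show "sets (distr Coins tree_space (Frun g q0 t)) = sets tree_space" by simp
    fix \<rho> :: "bool list \<Rightarrow> 'q" and n
    have "emeasure (distr Coins tree_space (Frun g q0 t)) (cyl \<rho> n) = emeasure Coins {c. Frun g q0 t c \<in> cyl \<rho> n}"
      by (subst emeasure_distr[OF meas cyl_sets]) (simp add: vimage_def)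
    also have "\<dots> = (if \<rho> [] = q0
         then ennreal (\<Prod>u\<in>{u. length u < n}. \<delta>T (\<rho> u) (t u) (\<rho> (u @ [False])) (\<rho> (u @ [True])))
         else 0)"
      unfolding emeasure_Frun_cyl card
      by (simp add: prod_ennreal nn)
    finally show "emeasure (distr Coins tree_space (Frun g q0 t)) (cyl \<rho> n) = (if \<rho> [] = q0
         then ennreal (\<Prod>u\<in>{u. length u < n}. \<delta>T (\<rho> u) (t u) (\<rho> (u @ [False])) (\<rho> (u @ [True])))
         else 0)" .
  qed
  then have PS: "P (SOME M. P M)" by (rule someI)
  show ?thesis unfolding rm
  proof (rule tree_measure_unique)
    show "sets (SOME M. P M) = sets tree_space" using PS by (simp add: P_def)
    show "sets (distr Coins tree_space (Frun g q0 t)) = sets tree_space" by simp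
    show "finite_measure (SOME M. P M)" using PS by (auto simp: P_def prob_space_def)
    fix \<rho> n show "emeasure (SOME M. P M) (cyl \<rho> n) = emeasure (distr Coins tree_space (Frun g q0 t)) (cyl \<rho> n)"
    proof -
      have Pd: "\<And>M. P M \<Longrightarrow> emeasure M (cyl \<rho> n) = (if \<rho> [] = q0
         then ennreal (\<Prod>u\<in>{u. length u < n}. \<delta>T (\<rho> u) (t u) (\<rho> (u @ [False])) (\<rho> (u @ [True])))
         else 0)" unfolding P_def by blast
      show ?thesis using Pd[OF PS] Pd[OF PD] by simp
    qed
  qed
qed



lemma two_half:
  fixes \<delta> :: "'q::finite \<Rightarrow> 'a \<Rightarrow> 'q \<Rightarrow> real"
  assumes "binary_branching_word \<delta>"
  shows "\<exists>x y. x \<noteq> y \<and> {z. \<delta> p a z = 1/2} = {x, y}"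
proof -
  define H where "H = {z. \<delta> p a z = 1/2}"
  have vals: "\<And>z. \<delta> p a z = 0 \<or> \<delta> p a z = 1/2" using assms by (auto simp: binary_branching_word_def)
  have "1 = (\<Sum>z\<in>UNIV. \<delta> p a z)" using assms by (simp add: binary_branching_word_def)
  also have "\<dots> = (\<Sum>z\<in>UNIV. if z \<in> H then 1/2 else 0)"
    by (rule sum.cong) (use vals in \<open>auto simp: H_def\<close>)
  also have "\<dots> = real (card H) / 2"
    by (simp add: sum.If_cases)
  finally have "card H = 2" by simp
  then show ?thesis unfolding H_def by (auto simp: card_2_iff)
qed

definition sel :: "('q \<Rightarrow> 'a \<Rightarrow> 'q \<Rightarrow> real) \<Rightarrow> 'q \<Rightarrow> 'a \<Rightarrow> bool \<Rightarrow> 'q" where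
  "sel \<delta> p a b = (let pr = (SOME pr. fst pr \<noteq> snd pr \<and> {z. \<delta> p a z = 1/2} = {fst pr, snd pr})
     in if b then snd pr else fst pr)"

lemma sel_props:
  fixes \<delta> :: "'q::finite \<Rightarrow> 'a \<Rightarrow> 'q \<Rightarrow> real"
  assumes "binary_branching_word \<delta>"
  shows "sel \<delta> p a True \<noteq> sel \<delta> p a False"
    and "\<delta> p a z = 1/2 \<longleftrightarrow> z = sel \<delta> p a True \<or> z = sel \<delta> p a False"
    and "\<delta> p a z \<noteq> 1/2 \<Longrightarrow> \<delta> p a z = 0"
proof -
  define pr where "pr = (SOME pr. fst pr \<noteq> snd pr \<and> {z. \<delta> p a z = 1/2} = {fst pr, snd pr})"
  have "\<exists>pr. fst pr \<noteq> snd pr \<and> {z. \<delta> p a z = 1/2} = {fst pr, snd pr}"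
    using two_half[OF assms, of p a] by auto
  then have P: "fst pr \<noteq> snd pr \<and> {z. \<delta> p a z = 1/2} = {fst pr, snd pr}"
    unfolding pr_def by (rule someI_ex)
  have s: "sel \<delta> p a b = (if b then snd pr else fst pr)" for b
    by (simp add: sel_def pr_def Let_def)
  show "sel \<delta> p a True \<noteq> sel \<delta> p a False" using P s by auto
  show "\<delta> p a z = 1/2 \<longleftrightarrow> z = sel \<delta> p a True \<or> z = sel \<delta> p a False"
    using P s by (auto simp: set_eq_iff)
  show "\<delta> p a z \<noteq> 1/2 \<Longrightarrow> \<delta> p a z = 0" using assms by (auto simp: binary_branching_word_def)
qed

definition g1 :: "('q \<Rightarrow> 'a \<Rightarrow> 'q \<Rightarrow> real) \<Rightarrow> 'q \<Rightarrow> 'a \<Rightarrow> bool \<Rightarrow> bool \<Rightarrow> 'q" where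
  "g1 \<delta> p a c b = sel \<delta> p a c"
definition g2 :: "('q \<Rightarrow> 'a \<Rightarrow> 'q \<Rightarrow> real) \<Rightarrow> 'q \<Rightarrow> 'a \<Rightarrow> bool \<Rightarrow> bool \<Rightarrow> 'q" where
  "g2 \<delta> p a c b = sel \<delta> p a (c \<noteq> b)"

lemma card_bool_set: "card {x::bool. P x} = of_bool (P True) + of_bool (P False)"
proof -
  have "{x::bool. P x} = (if P True then {True} else {}) \<union> (if P False then {False} else {})"
    by (auto; case_tac x; simp)
  then show ?thesis by auto
qed

lemma card_g1:
  fixes \<delta> :: "'q::finite \<Rightarrow> 'a \<Rightarrow> 'q \<Rightarrow> real"
  assumes bb: "binary_branching_word \<delta>"
  shows "real (card (Sset (g1 \<delta>) t \<rho> u)) / 2 = delta1 \<delta> (\<rho> u) (t u) (\<rho> (u @ [False])) (\<rho> (u @ [True]))"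
proof -
  let ?p = "\<rho> u" and ?a = "t u"
  have S: "Sset (g1 \<delta>) t \<rho> u = {x. sel \<delta> ?p ?a x = \<rho> (u @ [False]) \<and> sel \<delta> ?p ?a x = \<rho> (u @ [True])}"
    by (auto simp: Sset_def g1_def all_bool_eq)
  note sp = sel_props[OF bb, of ?p ?a]
  define r0 where "r0 = \<rho> (u @ [False])"
  define r1 where "r1 = \<rho> (u @ [True])"
  define sT where "sT = sel \<delta> ?p ?a True"
  define sF where "sF = sel \<delta> ?p ?a False"
  have ne: "sT \<noteq> sF" using sp(1) by (simp add: sT_def sF_def)
  have h: "\<delta> ?p ?a r0 = 1/2 \<longleftrightarrow> r0 = sT \<or> r0 = sF" using sp(2) by (simp add: sT_def sF_def)
  have z: "\<delta> ?p ?a r0 \<noteq> 1/2 \<Longrightarrow> \<delta> ?p ?a r0 = 0" using sp(3) .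
  show ?thesis unfolding S card_bool_set delta1_def
    unfolding r0_def[symmetric] r1_def[symmetric] sT_def[symmetric] sF_def[symmetric]
  proof (cases "r0 = r1")
    case False then show "real (of_bool (sT = r0 \<and> sT = r1) + of_bool (sF = r0 \<and> sF = r1)) / 2 =
      (if r0 = r1 then \<delta> ?p ?a r0 else 0)" by auto
  next
    case True
    then show "real (of_bool (sT = r0 \<and> sT = r1) + of_bool (sF = r0 \<and> sF = r1)) / 2 =
      (if r0 = r1 then \<delta> ?p ?a r0 else 0)"
      using ne h z by (cases "r0 = sT"; cases "r0 = sF") auto
  qed
qed

lemma card_g2:
  fixes \<delta> :: "'q::finite \<Rightarrow> 'a \<Rightarrow> 'q \<Rightarrow> real"
  assumes bb: "binary_branching_word \<delta>"
  shows "real (card (Sset (g2 \<delta>) t \<rho> u)) / 2 = delta2 \<delta> (\<rho> u) (t u) (\<rho> (u @ [False])) (\<rho> (u @ [True]))"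
proof -
  let ?p = "\<rho> u" and ?a = "t u"
  have S: "Sset (g2 \<delta>) t \<rho> u = {x. sel \<delta> ?p ?a x = \<rho> (u @ [False]) \<and> sel \<delta> ?p ?a (\<not> x) = \<rho> (u @ [True])}"
    by (auto simp: Sset_def g2_def all_bool_eq)
  note sp = sel_props[OF bb, of ?p ?a]
  define r0 where "r0 = \<rho> (u @ [False])"
  define r1 where "r1 = \<rho> (u @ [True])"
  define sT where "sT = sel \<delta> ?p ?a True"
  define sF where "sF = sel \<delta> ?p ?a False"
  have ne: "sT \<noteq> sF" using sp(1) by (simp add: sT_def sF_def)
  have h0: "\<delta> ?p ?a r0 = 1/2 \<longleftrightarrow> r0 = sT \<or> r0 = sF" using sp(2) by (simp add: sT_def sF_def)
  have h1: "\<delta> ?p ?a r1 = 1/2 \<longleftrightarrow> r1 = sT \<or> r1 = sF" using sp(2) by (simp add: sT_def sF_def)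
  show ?thesis unfolding S card_bool_set delta2_def
    unfolding r0_def[symmetric] r1_def[symmetric] sT_def[symmetric] sF_def[symmetric] not_True_eq_False not_False_eq_True
    using ne h0 h1 by (cases "r0 = sT"; cases "r0 = sF"; cases "r1 = sT"; cases "r1 = sF") auto
qed



lemma meas_comp_coin: "(\<lambda>\<pi>. \<pi> n) \<in> coin \<rightarrow>\<^sub>M count_space UNIV"
proof -
  have "(\<lambda>\<pi>. \<pi> n) \<in> coin \<rightarrow>\<^sub>M measure_pmf (pmf_of_set (UNIV :: bool set))"
    unfolding coin_def by (rule measurable_component_singleton) simp
  then show ?thesis by (simp add: measurable_def)
qed

lemma meas_prefix: "(\<lambda>\<pi>. map \<pi> [0..<n]) \<in> coin \<rightarrow>\<^sub>M count_space UNIV"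
proof (induction n)
  case 0 then show ?case by simp
next
  case (Suc n)
  have "(\<lambda>\<pi>. (\<lambda>l \<pi>. l @ [\<pi> n]) (map \<pi> [0..<n]) \<pi>) \<in> coin \<rightarrow>\<^sub>M count_space UNIV"
    apply (rule measurable_compose_countable[where f="\<lambda>l \<pi>. l @ [\<pi> n]", OF _ Suc.IH])
    apply (rule measurable_compose[OF meas_comp_coin])
    apply simp
    done
  then show ?case by simp
qed

lemma meas_along:
  fixes R :: "'x \<Rightarrow> bool list \<Rightarrow> 'q::countable"
  assumes "\<And>u. (\<lambda>x. R x u) \<in> N \<rightarrow>\<^sub>M count_space UNIV"
  shows "(\<lambda>z. R (fst z) (map (snd z) [0..<n])) \<in> N \<Otimes>\<^sub>M coin \<rightarrow>\<^sub>M count_space UNIV"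
proof -
  have "(\<lambda>z. (\<lambda>l z. R (fst z) l) (map (snd z) [0..<n]) z) \<in> N \<Otimes>\<^sub>M coin \<rightarrow>\<^sub>M count_space UNIV"
    apply (rule measurable_compose_countable[where f="\<lambda>l z. R (fst z) l"])
     apply (rule measurable_compose[OF measurable_fst assms])
    apply (rule measurable_compose[OF measurable_snd meas_prefix])
    done
  then show ?thesis by simp
qed

lemma parity_alt:
  "parity_acc \<alpha> r \<longleftrightarrow> (\<exists>S. (\<forall>q. q \<in> S \<longleftrightarrow> (\<forall>m. \<exists>n\<ge>m. r n = q)) \<and> even (Min (\<alpha> ` S)))"
proof -
  have "{\<alpha> q | q. \<exists>\<^sub>\<infinity> n. r n = q} = \<alpha> ` {q. \<forall>m. \<exists>n\<ge>m. r n = q}"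
    by (auto simp: INFM_nat_le)
  then have "parity_acc \<alpha> r \<longleftrightarrow> even (Min (\<alpha> ` {q. \<forall>m. \<exists>n\<ge>m. r n = q}))"
    unfolding parity_acc_def by simp
  also have "\<dots> \<longleftrightarrow> (\<exists>S. (\<forall>q. q \<in> S \<longleftrightarrow> (\<forall>m. \<exists>n\<ge>m. r n = q)) \<and> even (Min (\<alpha> ` S)))"
  proof
    assume "even (Min (\<alpha> ` {q. \<forall>m. \<exists>n\<ge>m. r n = q}))"
    then show "\<exists>S. (\<forall>q. q \<in> S \<longleftrightarrow> (\<forall>m. \<exists>n\<ge>m. r n = q)) \<and> even (Min (\<alpha> ` S))"
      by (intro exI[of _ "{q. \<forall>m. \<exists>n\<ge>m. r n = q}"]) simp
  next
    assume "\<exists>S. (\<forall>q. q \<in> S \<longleftrightarrow> (\<forall>m. \<exists>n\<ge>m. r n = q)) \<and> even (Min (\<alpha> ` S))"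
    then obtain S where "\<forall>q. q \<in> S \<longleftrightarrow> (\<forall>m. \<exists>n\<ge>m. r n = q)" "even (Min (\<alpha> ` S))" by blast
    moreover then have "S = {q. \<forall>m. \<exists>n\<ge>m. r n = q}" by blast
    ultimately show "even (Min (\<alpha> ` {q. \<forall>m. \<exists>n\<ge>m. r n = q}))" by simp
  qed
  finally show ?thesis .
qed

lemma pred_parity:
  fixes r :: "'x \<Rightarrow> nat \<Rightarrow> 'q::finite"
  assumes "\<And>n. (\<lambda>x. r x n) \<in> M \<rightarrow>\<^sub>M count_space UNIV"
  shows "Measurable.pred M (\<lambda>x. parity_acc \<alpha> (r x))"
proof -
  have eq: "Measurable.pred M (\<lambda>x. r x n = q)" for n q
  proof -
    have "{x \<in> space M. r x n = q} = (\<lambda>x. r x n) -` {q} \<inter> space M" by auto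
    also have "\<dots> \<in> sets M" by (rule measurable_sets[OF assms]) simp
    finally show ?thesis unfolding pred_def .
  qed
  show ?thesis unfolding parity_alt
    by (intro pred_intros_countable pred_intros_logic eq measurable_const) simp_all
qed



definition flip :: "(nat \<Rightarrow> bool) \<Rightarrow> (bool list \<Rightarrow> bool) \<Rightarrow> (bool list \<Rightarrow> bool)" where
  "flip \<pi> c = (\<lambda>u. c u \<noteq> \<pi> (length u))"

lemma along_flip:
  "along (Frun (g2 \<delta>) q0 t (flip \<pi> c)) \<pi> = along (Frun (g1 \<delta>) q0 t c) \<pi>"
proof
  fix n show "along (Frun (g2 \<delta>) q0 t (flip \<pi> c)) \<pi> n = along (Frun (g1 \<delta>) q0 t c) \<pi> n"
    unfolding along_def
  proof (induction n)
    case 0 then show ?case by simp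
  next
    case (Suc n)
    then show ?case by (cases "\<pi> n") (simp_all add: g1_def g2_def flip_def)
  qed
qed

lemma meas_flip: "flip \<pi> \<in> Coins \<rightarrow>\<^sub>M Coins"
proof -
  have "(\<lambda>c u. c u \<noteq> \<pi> (length u)) \<in> Coins \<rightarrow>\<^sub>M Coins"
    unfolding Coins_def
  proof (rule measurable_PiM_single')
    fix u :: "bool list"
    have "(\<lambda>c. c u \<noteq> \<pi> (length u)) \<in> Coins \<rightarrow>\<^sub>M count_space UNIV"
      by (rule measurable_compose[OF meas_comp_Coins]) simp
    then show "(\<lambda>c. c u \<noteq> \<pi> (length u)) \<in> Pi\<^sub>M UNIV (\<lambda>_. measure_pmf (pmf_of_set UNIV)) \<rightarrow>\<^sub>M measure_pmf (pmf_of_set UNIV)"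
      unfolding Coins_def by (simp add: measurable_def)
  qed (simp add: space_PiM)
  then show ?thesis by (simp add: flip_def[abs_def])
qed

lemma distr_flip: "distr Coins Coins (flip \<pi>) = Coins"
proof -
  interpret product_prob_space "\<lambda>_. measure_pmf (pmf_of_set (UNIV :: bool set))" "UNIV :: bool list set"
    by unfold_locales
  show ?thesis unfolding Coins_def
  proof (rule PiM_eq)
    show "sets (distr (Pi\<^sub>M UNIV (\<lambda>_. measure_pmf (pmf_of_set UNIV))) (Pi\<^sub>M UNIV (\<lambda>_. measure_pmf (pmf_of_set UNIV))) (flip \<pi>)) =
      sets (Pi\<^sub>M UNIV (\<lambda>_. measure_pmf (pmf_of_set (UNIV :: bool set))))" by simp
    fix J :: "bool list set" and F :: "bool list \<Rightarrow> bool set"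
    assume J: "finite J"
    define G where "G j = {b. (b \<noteq> \<pi> (length j)) \<in> F j}" for j
    have "card (G j) = card (F j)" for j
    proof -
      have "G j = (\<lambda>b. b \<noteq> \<pi> (length j)) -` F j" by (auto simp: G_def)
      also have "card \<dots> = card (F j)"
        by (rule card_vimage_inj) (auto simp: inj_def surj_def intro: exI[of _ "\<not> x" for x])
      finally show ?thesis .
    qed
    then have eqG: "emeasure (measure_pmf (pmf_of_set (UNIV :: bool set))) (G j) = emeasure (measure_pmf (pmf_of_set (UNIV :: bool set))) (F j)" for j
      by (simp add: emeasure_coinset)
    have pe: "prod_emb UNIV (\<lambda>_. measure_pmf (pmf_of_set (UNIV :: bool set))) J (Pi\<^sub>E J F) = {c. \<forall>j\<in>J. c j \<in> F j}"
      by (auto simp: prod_emb_def PiE_iff)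
    have "emeasure (distr Coins Coins (flip \<pi>)) (prod_emb UNIV (\<lambda>_. measure_pmf (pmf_of_set (UNIV :: bool set))) J (Pi\<^sub>E J F))
        = emeasure Coins (flip \<pi> -` {c. \<forall>j\<in>J. c j \<in> F j})"
    proof -
      have mem: "{c. \<forall>j\<in>J. c j \<in> F j} \<in> sets Coins"
        unfolding pe[symmetric] Coins_def by (rule sets_PiM_I) (auto simp: J)
      show ?thesis unfolding pe by (subst emeasure_distr[OF meas_flip mem]) simp
    qed
    also have "flip \<pi> -` {c. \<forall>j\<in>J. c j \<in> F j} = {c \<in> space Coins. \<forall>j\<in>J. c j \<in> G j}"
      by (auto simp: flip_def G_def)
    also have "emeasure Coins \<dots> = (\<Prod>j\<in>J. emeasure (measure_pmf (pmf_of_set (UNIV :: bool set))) (G j))"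
      unfolding Coins_def by (rule emeasure_PiM_Collect) (auto simp: J)
    also have "\<dots> = (\<Prod>j\<in>J. emeasure (measure_pmf (pmf_of_set (UNIV :: bool set))) (F j))"
      by (simp add: eqG)
    finally show "emeasure (distr (Pi\<^sub>M UNIV (\<lambda>_. measure_pmf (pmf_of_set UNIV))) (Pi\<^sub>M UNIV (\<lambda>_. measure_pmf (pmf_of_set UNIV))) (flip \<pi>))
         (prod_emb UNIV (\<lambda>_. measure_pmf (pmf_of_set UNIV)) J (Pi\<^sub>E J F)) =
        (\<Prod>j\<in>J. emeasure (measure_pmf (pmf_of_set UNIV)) (F j))"
      unfolding Coins_def .
  qed
qed



lemma meas_tree_comp: "(\<lambda>\<rho>. \<rho> v) \<in> (tree_space :: (bool list \<Rightarrow> 'q) measure) \<rightarrow>\<^sub>M count_space UNIV"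
  unfolding tree_space_def by (rule measurable_component_singleton) simp

lemma Xset_sets:
  fixes R :: "'x \<Rightarrow> bool list \<Rightarrow> 'q::finite"
  assumes "\<And>u. (\<lambda>x. R x u) \<in> N \<rightarrow>\<^sub>M count_space UNIV"
  shows "{z \<in> space (N \<Otimes>\<^sub>M coin). parity_acc \<alpha> (along (R (fst z)) (snd z))} \<in> sets (N \<Otimes>\<^sub>M coin)"
proof -
  have "Measurable.pred (N \<Otimes>\<^sub>M coin) (\<lambda>z. parity_acc \<alpha> (\<lambda>n. R (fst z) (map (snd z) [0..<n])))"
    by (rule pred_parity) (rule meas_along[OF assms])
  then show ?thesis unfolding pred_def along_def[abs_def] .
qed

lemma pred_tree_eq: "Measurable.pred (tree_space :: (bool list \<Rightarrow> 'q) measure) (\<lambda>\<rho>. \<rho> v = q)"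
proof -
  have "{x \<in> space tree_space. x v = q} = (\<lambda>\<rho>. \<rho> v) -` {q} \<inter> space (tree_space :: (bool list \<Rightarrow> 'q) measure)" by auto
  also have "\<dots> \<in> sets tree_space" by (rule measurable_sets[OF meas_tree_comp]) simp
  finally show ?thesis unfolding pred_def .
qed

lemma A_sets:
  fixes \<delta>T :: "'q::finite \<Rightarrow> 'a \<Rightarrow> 'q \<Rightarrow> 'q \<Rightarrow> real"
  shows "{\<rho>. is_run \<delta>T q0 t \<rho> \<and> qual_accepting \<alpha> \<rho>} \<in> sets tree_space"
proof -
  define X :: "((bool list \<Rightarrow> 'q) \<times> (nat \<Rightarrow> bool)) set" where
    "X = {z \<in> space (tree_space \<Otimes>\<^sub>M coin). parity_acc \<alpha> (along (fst z) (snd z))}"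
  have X: "X \<in> sets (tree_space \<Otimes>\<^sub>M coin)"
    unfolding X_def using Xset_sets[of "\<lambda>x. x" tree_space \<alpha>, OF meas_tree_comp] by simp
  interpret coin: prob_space coin by (rule prob_coin)
  have fm: "(\<lambda>\<rho>. emeasure coin (Pair \<rho> -` X)) \<in> borel_measurable tree_space"
    by (rule coin.measurable_emeasure_Pair[OF X])
  have q: "qual_accepting \<alpha> \<rho> \<longleftrightarrow> emeasure coin (Pair \<rho> -` X) = 1" for \<rho>
  proof -
    have "Pair \<rho> -` X = {\<pi>. parity_acc \<alpha> (along \<rho> \<pi>)}"
      by (auto simp: X_def space_pair_measure)
    then show ?thesis by (simp add: qual_accepting_def)
  qed
  have pq: "Measurable.pred tree_space (\<lambda>\<rho>. qual_accepting \<alpha> \<rho>)"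
  proof -
    have "{x \<in> space tree_space. qual_accepting \<alpha> x} = (\<lambda>\<rho>. emeasure coin (Pair \<rho> -` X)) -` {1} \<inter> space tree_space"
      by (auto simp: q)
    also have "\<dots> \<in> sets tree_space" by (rule measurable_sets[OF fm]) simp
    finally show ?thesis unfolding pred_def .
  qed
  have pr: "Measurable.pred tree_space (\<lambda>\<rho>. is_run \<delta>T q0 t \<rho>)"
  proof -
    have eq: "is_run \<delta>T q0 t \<rho> \<longleftrightarrow> \<rho> [] = q0 \<and> (\<forall>u. \<exists>q1 q2 q3. \<rho> u = q1 \<and> \<rho> (u @ [False]) = q2 \<and> \<rho> (u @ [True]) = q3
        \<and> \<delta>T q1 (t u) q2 q3 > 0)" for \<rho>
      by (auto simp: is_run_def)
    show ?thesis unfolding eq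
      by (intro pred_intros_countable pred_intros_logic pred_tree_eq measurable_const) simp_all
  qed
  have "Measurable.pred tree_space (\<lambda>\<rho>. is_run \<delta>T q0 t \<rho> \<and> qual_accepting \<alpha> \<rho>)"
    using pr pq by (rule pred_intros_logic)
  then show ?thesis unfolding pred_def by simp
qed

lemma int_one:
  assumes "prob_space M" "f \<in> borel_measurable M" "\<And>x. f x \<le> 1"
  shows "emeasure M {x \<in> space M. f x = 1} = 1 \<longleftrightarrow> (\<integral>\<^sup>+x. f x \<partial>M) = 1"
proof -
  interpret prob_space M by fact
  have pm: "Measurable.pred M (\<lambda>x. f x = 1)"
    using assms(2) by measurable
  show ?thesis
  proof
    assume "emeasure M {x \<in> space M. f x = 1} = 1"
    then have "AE x in M. f x = 1" by (subst AE_iff_emeasure_eq_1[OF pm])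
    then have "(\<integral>\<^sup>+x. f x \<partial>M) = (\<integral>\<^sup>+x. 1 \<partial>M)" by (rule nn_integral_cong_AE)
    then show "(\<integral>\<^sup>+x. f x \<partial>M) = 1" by (simp add: emeasure_space_1)
  next
    assume I: "(\<integral>\<^sup>+x. f x \<partial>M) = 1"
    have "(\<integral>\<^sup>+x. 1 - f x \<partial>M) = (\<integral>\<^sup>+x. 1 \<partial>M) - (\<integral>\<^sup>+x. f x \<partial>M)"
      by (rule nn_integral_diff) (use assms I in auto)
    also have "\<dots> = 0" using I by (simp add: emeasure_space_1)
    finally have "AE x in M. 1 - f x = 0"
      by (subst (asm) nn_integral_0_iff_AE) (use assms in auto)
    moreover have "\<And>x. 1 - f x = 0 \<Longrightarrow> f x = 1"
      using assms(3) by (metis antisym ennreal_minus_eq_0)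
    ultimately have "AE x in M. f x = 1" by auto
    then show "emeasure M {x \<in> space M. f x = 1} = 1"
      by (subst AE_iff_emeasure_eq_1[OF pm, symmetric])
  qed
qed



lemma lang_iff:
  fixes \<delta>T :: "'q::finite \<Rightarrow> 'a \<Rightarrow> 'q \<Rightarrow> 'q \<Rightarrow> real"
  assumes card: "\<And>\<rho> u. real (card (Sset g t \<rho> u)) / 2 = \<delta>T (\<rho> u) (t u) (\<rho> (u @ [False])) (\<rho> (u @ [True]))"
  shows "t \<in> lang_qual \<delta>T q0 \<alpha> \<longleftrightarrow>
    emeasure (Coins \<Otimes>\<^sub>M coin) {z \<in> space (Coins \<Otimes>\<^sub>M coin). parity_acc \<alpha> (along (Frun g q0 t (fst z)) (snd z))} = 1"
proof -
  define X where "X = {z \<in> space (Coins \<Otimes>\<^sub>M coin). parity_acc \<alpha> (along (Frun g q0 t (fst z)) (snd z))}"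
  have X: "X \<in> sets (Coins \<Otimes>\<^sub>M coin)"
    unfolding X_def by (rule Xset_sets) (rule meas_Frun_u)
  interpret coin: prob_space coin by (rule prob_coin)
  interpret C: prob_space Coins by (rule prob_Coins)
  define fX where "fX c = emeasure coin (Pair c -` X)" for c
  have fm: "fX \<in> borel_measurable Coins"
    unfolding fX_def by (rule coin.measurable_emeasure_Pair[OF X])
  have run: "is_run \<delta>T q0 t (Frun g q0 t c)" for c
    unfolding is_run_def
  proof (intro conjI allI)
    fix u
    have "c u \<in> Sset g t (Frun g q0 t c) u" by (simp add: Sset_def)
    then have "0 < card (Sset g t (Frun g q0 t c) u)" by (auto simp: card_gt_0_iff)
    then have "0 < real (card (Sset g t (Frun g q0 t c) u)) / 2" by simp
    then show "0 < \<delta>T (Frun g q0 t c u) (t u) (Frun g q0 t c (u @ [False])) (Frun g q0 t c (u @ [True]))"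
      by (simp only: card)
  qed simp
  have pre: "Frun g q0 t -` {\<rho>. is_run \<delta>T q0 t \<rho> \<and> qual_accepting \<alpha> \<rho>} \<inter> space Coins = {c \<in> space Coins. fX c = 1}"
  proof -
    have "Pair c -` X = {\<pi>. parity_acc \<alpha> (along (Frun g q0 t c) \<pi>)}" for c
      by (auto simp: X_def space_pair_measure)
    then show ?thesis using run by (auto simp: qual_accepting_def fX_def)
  qed
  have "t \<in> lang_qual \<delta>T q0 \<alpha> \<longleftrightarrow> emeasure (distr Coins tree_space (Frun g q0 t)) {\<rho>. is_run \<delta>T q0 t \<rho> \<and> qual_accepting \<alpha> \<rho>} = 1"
    by (simp add: lang_qual_def run_measure_eq[OF card])
  also have "\<dots> \<longleftrightarrow> emeasure Coins {c \<in> space Coins. fX c = 1} = 1"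
    by (subst emeasure_distr[OF meas_Frun A_sets]) (simp only: pre)
  also have "\<dots> \<longleftrightarrow> (\<integral>\<^sup>+c. fX c \<partial>Coins) = 1"
    by (rule int_one[OF prob_Coins fm]) (simp add: fX_def coin.emeasure_le_1)
  also have "(\<integral>\<^sup>+c. fX c \<partial>Coins) = emeasure (Coins \<Otimes>\<^sub>M coin) X"
    unfolding fX_def by (rule coin.emeasure_pair_measure_alt[OF X, symmetric])
  finally show ?thesis unfolding X_def .
qed

lemma pair_equal:
  fixes \<delta> :: "'q::finite \<Rightarrow> 'a \<Rightarrow> 'q \<Rightarrow> real"
  shows "emeasure (Coins \<Otimes>\<^sub>M coin) {z \<in> space (Coins \<Otimes>\<^sub>M coin). parity_acc \<alpha> (along (Frun (g1 \<delta>) q0 t (fst z)) (snd z))}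
       = emeasure (Coins \<Otimes>\<^sub>M coin) {z \<in> space (Coins \<Otimes>\<^sub>M coin). parity_acc \<alpha> (along (Frun (g2 \<delta>) q0 t (fst z)) (snd z))}"
proof -
  define X1 where "X1 = {z \<in> space (Coins \<Otimes>\<^sub>M coin). parity_acc \<alpha> (along (Frun (g1 \<delta>) q0 t (fst z)) (snd z))}"
  define X2 where "X2 = {z \<in> space (Coins \<Otimes>\<^sub>M coin). parity_acc \<alpha> (along (Frun (g2 \<delta>) q0 t (fst z)) (snd z))}"
  have X1: "X1 \<in> sets (Coins \<Otimes>\<^sub>M coin)"
    unfolding X1_def by (rule Xset_sets) (rule meas_Frun_u)
  have X2: "X2 \<in> sets (Coins \<Otimes>\<^sub>M coin)"
    unfolding X2_def by (rule Xset_sets) (rule meas_Frun_u)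
  interpret P: pair_prob_space Coins coin
    unfolding pair_prob_space_def pair_sigma_finite_def using prob_Coins prob_coin
    by (simp add: prob_space_imp_sigma_finite)
  have eq: "emeasure Coins ((\<lambda>c. (c, \<pi>)) -` X1) = emeasure Coins ((\<lambda>c. (c, \<pi>)) -` X2)" for \<pi>
  proof -
    have mp: "(\<lambda>c. (c, \<pi>)) \<in> Coins \<rightarrow>\<^sub>M Coins \<Otimes>\<^sub>M coin" by measurable
    have B: "(\<lambda>c. (c, \<pi>)) -` X2 \<inter> space Coins \<in> sets Coins" by (rule measurable_sets[OF mp X2])
    have s: "(\<lambda>c. (c, \<pi>)) -` X1 = flip \<pi> -` ((\<lambda>c. (c, \<pi>)) -` X2 \<inter> space Coins) \<inter> space Coins"
      by (auto simp: X1_def X2_def space_pair_measure along_flip)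
    have "emeasure Coins ((\<lambda>c. (c, \<pi>)) -` X1) = emeasure (distr Coins Coins (flip \<pi>)) ((\<lambda>c. (c, \<pi>)) -` X2 \<inter> space Coins)"
      unfolding s by (rule emeasure_distr[OF meas_flip B, symmetric])
    also have "\<dots> = emeasure Coins ((\<lambda>c. (c, \<pi>)) -` X2 \<inter> space Coins)" by (simp only: distr_flip)
    also have "\<dots> = emeasure Coins ((\<lambda>c. (c, \<pi>)) -` X2)" by simp
    finally show ?thesis .
  qed
  show ?thesis
    unfolding X1_def[symmetric] X2_def[symmetric]
    by (simp add: P.emeasure_pair_measure_alt2[OF X1] P.emeasure_pair_measure_alt2[OF X2] eq)
qed

theorem lemma3p10:
  fixes \<delta> :: "'q::finite \<Rightarrow> 'a::finite \<Rightarrow> 'q \<Rightarrow> real"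
    and q\<iota> :: 'q and \<alpha> :: "'q \<Rightarrow> nat"
  assumes "binary_branching_word \<delta>"
  shows "lang_qual (delta1 \<delta>) q\<iota> \<alpha> = lang_qual (delta2 \<delta>) q\<iota> \<alpha>"
proof (rule set_eqI)
  fix t :: "bool list \<Rightarrow> 'a"
  show "t \<in> lang_qual (delta1 \<delta>) q\<iota> \<alpha> \<longleftrightarrow> t \<in> lang_qual (delta2 \<delta>) q\<iota> \<alpha>"
    unfolding lang_iff[of "g1 \<delta>" t "delta1 \<delta>", OF card_g1[OF assms]]
              lang_iff[of "g2 \<delta>" t "delta2 \<delta>", OF card_g2[OF assms]]
    by (simp add: pair_equal)
qed


end
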